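(* Let $R$ be a ring. If the factor ring $R/J(R)$ is NJ-symmetric, then $R$ is NJ-symmetric.
   Context: Rings are associative with identity. $N(R)$ is the set of nilpotent elements, $J(R)$ the Jacobson radical. $R$ is NJ-symmetric if for all $a,b,c\in R$, $abc\in N(R)$ implies $bac\in J(R)$. *)

theory Defs
  imports "HOL-Algebra.QuotRing"
begin

definition left_ideal :: "('a, 'b) ring_scheme \<Rightarrow> 'a set \<Rightarrow> bool" where
  "left_ideal R I \<longleftrightarrow> subgroup I (add_monoid R) \<and>
     (\<forall>a \<in> carrier R. \<forall>x \<in> I. a \<otimes>\<^bsub>R\<^esub> x \<in> I)"

definition maximal_left_ideal :: "('a, 'b) ring_scheme \<Rightarrow> 'a set \<Rightarrow> bool" where
  "maximal_left_ideal R I \<longleftrightarrow> left_ideal R I \<and> I \<noteq> carrier R \<and>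
     (\<forall>K. left_ideal R K \<and> I \<subseteq> K \<and> K \<noteq> carrier R \<longrightarrow> K = I)"

text \<open>Jacobson radical: intersection of all maximal left ideals
  (the whole ring if there are none, i.e. for the zero ring).\<close>
definition jacobson :: "('a, 'b) ring_scheme \<Rightarrow> 'a set" where
  "jacobson R = carrier R \<inter> \<Inter> {I. maximal_left_ideal R I}"

definition nilpotents :: "('a, 'b) ring_scheme \<Rightarrow> 'a set" where
  "nilpotents R = {a \<in> carrier R. \<exists>n::nat. a [^]\<^bsub>R\<^esub> n = \<zero>\<^bsub>R\<^esub>}"

definition NJ_symmetric :: "('a, 'b) ring_scheme \<Rightarrow> bool" where
  "NJ_symmetric R \<longleftrightarrow> (\<forall>a \<in> carrier R. \<forall>b \<in> carrier R. \<forall>c \<in> carrier R.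
     a \<otimes>\<^bsub>R\<^esub> b \<otimes>\<^bsub>R\<^esub> c \<in> nilpotents R \<longrightarrow>
     b \<otimes>\<^bsub>R\<^esub> a \<otimes>\<^bsub>R\<^esub> c \<in> jacobson R)"

end

theory Submission
  imports Defs
begin

lemma left_ideal_iff:
  fixes R (structure)
  assumes "ring R"
  shows "left_ideal R I \<longleftrightarrow> I \<subseteq> carrier R \<and> \<zero> \<in> I \<and> (\<forall>x\<in>I. \<forall>y\<in>I. x \<oplus> y \<in> I)
     \<and> (\<forall>x\<in>I. \<ominus> x \<in> I) \<and> (\<forall>a\<in>carrier R. \<forall>x\<in>I. a \<otimes> x \<in> I)"
  unfolding left_ideal_def subgroup_def a_inv_def by auto

lemma colon_maximal:
  fixes R (structure)
  assumes R: "ring R" and M: "maximal_left_ideal R M" and r: "r \<in> carrier R" "r \<notin> M"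
  shows "maximal_left_ideal R {s \<in> carrier R. s \<otimes> r \<in> M}"
proof -
  interpret ring R by fact
  let ?K = "{s \<in> carrier R. s \<otimes> r \<in> M}"
  have HML: "left_ideal R M" and Mne: "M \<noteq> carrier R"
    and Mmax: "\<And>K. left_ideal R K \<Longrightarrow> M \<subseteq> K \<Longrightarrow> K \<noteq> carrier R \<Longrightarrow> K = M"
    using M unfolding maximal_left_ideal_def by auto
  have Mi: "M \<subseteq> carrier R" "\<zero> \<in> M" "\<And>x y. x \<in> M \<Longrightarrow> y \<in> M \<Longrightarrow> x \<oplus> y \<in> M"
    "\<And>x. x \<in> M \<Longrightarrow> \<ominus> x \<in> M" "\<And>a x. a \<in> carrier R \<Longrightarrow> x \<in> M \<Longrightarrow> a \<otimes> x \<in> M"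
    using HML left_ideal_iff[OF R] by auto
  have HKL: "left_ideal R ?K"
    unfolding left_ideal_iff[OF R]
  proof (intro conjI ballI)
    show "?K \<subseteq> carrier R" by blast
    show "\<zero> \<in> ?K" using r Mi(2) by simp
  next
    fix x y assume "x \<in> ?K" "y \<in> ?K"
    then show "x \<oplus> y \<in> ?K" using r Mi(3)[of "x \<otimes> r" "y \<otimes> r"] by (simp add: l_distr)
  next
    fix x assume "x \<in> ?K"
    then show "\<ominus> x \<in> ?K" using r Mi(4)[of "x \<otimes> r"] by (simp add: l_minus)
  next
    fix a x assume "a \<in> carrier R" "x \<in> ?K"
    then show "a \<otimes> x \<in> ?K" using r Mi(5)[of a "x \<otimes> r"] by (simp add: m_assoc)
  qed
  have "\<one> \<notin> ?K" using r by auto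
  then have Kne: "?K \<noteq> carrier R" by auto
  have "L = ?K" if L: "left_ideal R L" "?K \<subseteq> L" "L \<noteq> carrier R" for L
  proof (rule ccontr)
    assume "L \<noteq> ?K"
    with L obtain t where t: "t \<in> L" "t \<notin> ?K" by auto
    have Li: "L \<subseteq> carrier R" "\<zero> \<in> L" "\<And>x y. x \<in> L \<Longrightarrow> y \<in> L \<Longrightarrow> x \<oplus> y \<in> L"
      "\<And>x. x \<in> L \<Longrightarrow> \<ominus> x \<in> L" "\<And>a x. a \<in> carrier R \<Longrightarrow> x \<in> L \<Longrightarrow> a \<otimes> x \<in> L"
      using L left_ideal_iff[OF R] by auto
    let ?N = "{l \<otimes> r \<oplus> m | l m. l \<in> L \<and> m \<in> M}"
    have Nmem: "\<And>l m. l \<in> L \<Longrightarrow> m \<in> M \<Longrightarrow> l \<otimes> r \<oplus> m \<in> ?N" by blast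
    have HNL: "left_ideal R ?N"
      unfolding left_ideal_iff[OF R]
    proof (intro conjI ballI)
      show "?N \<subseteq> carrier R"
      proof
        fix x assume "x \<in> ?N"
        then obtain l m where x: "x = l \<otimes> r \<oplus> m" "l \<in> L" "m \<in> M" by auto
        then have "l \<in> carrier R" "m \<in> carrier R" using Li(1) Mi(1) by auto
        then show "x \<in> carrier R" using x r by simp
      qed
      have "\<zero> \<otimes> r \<oplus> \<zero> = \<zero>" using r by simp
      then show "\<zero> \<in> ?N" using Nmem[OF Li(2) Mi(2)] by metis
    next
      fix x y assume "x \<in> ?N" "y \<in> ?N"
      then obtain l m l' m' where x: "x = l \<otimes> r \<oplus> m" "l \<in> L" "m \<in> M"
        and y: "y = l' \<otimes> r \<oplus> m'" "l' \<in> L" "m' \<in> M" by auto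
      have c: "l \<in> carrier R" "l' \<in> carrier R" "m \<in> carrier R" "m' \<in> carrier R"
        using x y Li Mi by auto
      have "x \<oplus> y = (l \<oplus> l') \<otimes> r \<oplus> (m \<oplus> m')"
        using x y c r by (simp add: l_distr a_ac)
      then show "x \<oplus> y \<in> ?N" using Nmem[OF Li(3)[OF x(2) y(2)] Mi(3)[OF x(3) y(3)]] by simp
    next
      fix x assume "x \<in> ?N"
      then obtain l m where x: "x = l \<otimes> r \<oplus> m" "l \<in> L" "m \<in> M" by auto
      have c: "l \<in> carrier R" "m \<in> carrier R" using x Li Mi by auto
      have "\<ominus> x = (\<ominus> l) \<otimes> r \<oplus> (\<ominus> m)"
        using x c r by (simp add: l_minus minus_add)
      then show "\<ominus> x \<in> ?N" using Nmem[OF Li(4)[OF x(2)] Mi(4)[OF x(3)]] by simp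
    next
      fix a x assume a: "a \<in> carrier R" and "x \<in> ?N"
      then obtain l m where x: "x = l \<otimes> r \<oplus> m" "l \<in> L" "m \<in> M" by auto
      have c: "l \<in> carrier R" "m \<in> carrier R" using x Li Mi by auto
      have "a \<otimes> x = (a \<otimes> l) \<otimes> r \<oplus> (a \<otimes> m)"
        using x c r a by (simp add: r_distr m_assoc)
      then show "a \<otimes> x \<in> ?N" using Nmem[OF Li(5)[OF a x(2)] Mi(5)[OF a x(3)]] by simp
    qed
    have "M \<subseteq> ?N"
    proof
      fix m assume "m \<in> M"
      then have "\<zero> \<otimes> r \<oplus> m = m" using Mi(1) r by auto
      then show "m \<in> ?N" using Nmem[OF Li(2) \<open>m \<in> M\<close>] by metis
    qed
    moreover have "t \<otimes> r \<in> ?N" 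
    proof -
      have "t \<otimes> r \<oplus> \<zero> = t \<otimes> r" using t Li(1) r by auto
      then show ?thesis using Nmem[OF t(1) Mi(2)] by metis
    qed
    moreover have "t \<otimes> r \<notin> M" using t Li(1) by auto
    ultimately have Nc: "?N = carrier R" using Mmax[OF HNL] by blast
    have "carrier R \<subseteq> L"
    proof
      fix s assume s: "s \<in> carrier R"
      then have "s \<otimes> r \<in> ?N" using Nc r by auto
      then obtain l m where lm: "s \<otimes> r = l \<otimes> r \<oplus> m" "l \<in> L" "m \<in> M" by auto
      have c: "l \<in> carrier R" "m \<in> carrier R" using lm Li Mi by auto
      have "(s \<oplus> \<ominus> l) \<otimes> r = s \<otimes> r \<oplus> \<ominus> (l \<otimes> r)"
        using c s r by (simp add: l_distr l_minus)
      also have "\<dots> = (l \<otimes> r \<oplus> m) \<oplus> \<ominus> (l \<otimes> r)" using lm(1) by simp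
      also have "\<dots> = \<ominus> (l \<otimes> r) \<oplus> (l \<otimes> r \<oplus> m)"
        using c r by (simp add: a_comm[of "l \<otimes> r \<oplus> m" "\<ominus> (l \<otimes> r)"])
      also have "\<dots> = m" using c r by (simp add: r_neg1)
      finally have "(s \<oplus> \<ominus> l) \<otimes> r = m" .
      then have "s \<oplus> \<ominus> l \<in> ?K" using lm c s by auto
      then have "s \<oplus> \<ominus> l \<in> L" using L by auto
      then have "(s \<oplus> \<ominus> l) \<oplus> l \<in> L" using Li lm by auto
      moreover have "(s \<oplus> \<ominus> l) \<oplus> l = s" using c s by (simp add: a_assoc l_neg)
      ultimately show "s \<in> L" by simp
    qed
    then show False using L Li(1) by auto
  qed
  then show ?thesis unfolding maximal_left_ideal_def using HKL Kne by blast
qed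


lemma jac_mem: "x \<in> jacobson R \<longleftrightarrow> x \<in> carrier R \<and> (\<forall>M. maximal_left_ideal R M \<longrightarrow> x \<in> M)"
  unfolding jacobson_def by auto

lemma maxE:
  fixes R (structure)
  assumes R: "ring R" and M: "maximal_left_ideal R M"
  shows "M \<subseteq> carrier R" "\<zero> \<in> M" "\<And>x y. x \<in> M \<Longrightarrow> y \<in> M \<Longrightarrow> x \<oplus> y \<in> M"
    "\<And>x. x \<in> M \<Longrightarrow> \<ominus> x \<in> M" "\<And>a x. a \<in> carrier R \<Longrightarrow> x \<in> M \<Longrightarrow> a \<otimes> x \<in> M"
  using M left_ideal_iff[OF R] unfolding maximal_left_ideal_def by auto

lemma jacobson_ideal:
  fixes R (structure)
  assumes R: "ring R"
  shows "ideal (jacobson R) R"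
proof -
  interpret ring R by fact
  let ?J = "jacobson R"
  have JL: "left_ideal R ?J"
    unfolding left_ideal_iff[OF R]
  proof (intro conjI ballI)
    show "?J \<subseteq> carrier R" unfolding jacobson_def by blast
    show "\<zero> \<in> ?J" unfolding jac_mem using maxE(2)[OF R] by blast
  next
    fix x y assume "x \<in> ?J" "y \<in> ?J"
    then show "x \<oplus> y \<in> ?J" unfolding jac_mem using maxE(3)[OF R] by simp
  next
    fix x assume "x \<in> ?J"
    then show "\<ominus> x \<in> ?J" unfolding jac_mem using maxE(4)[OF R] by simp
  next
    fix a x assume "a \<in> carrier R" "x \<in> ?J"
    then show "a \<otimes> x \<in> ?J" unfolding jac_mem using maxE(5)[OF R] by simp
  qed
  show ?thesis
  proof (rule idealI[OF R])
    show "subgroup ?J (add_monoid R)" using JL unfolding left_ideal_def by blast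
  next
    fix a x assume "a \<in> ?J" "x \<in> carrier R"
    then show "x \<otimes> a \<in> ?J" using JL unfolding left_ideal_iff[OF R] by blast
  next
    fix a x assume a: "a \<in> ?J" and x: "x \<in> carrier R"
    have ac: "a \<in> carrier R" using a unfolding jac_mem by blast
    have "a \<otimes> x \<in> M" if M: "maximal_left_ideal R M" for M
    proof (cases "x \<in> M")
      case True
      then show ?thesis using maxE(5)[OF R M ac] by blast
    next
      case False
      then have "maximal_left_ideal R {s \<in> carrier R. s \<otimes> x \<in> M}"
        using colon_maximal[OF R M x] by blast
      then have "a \<in> {s \<in> carrier R. s \<otimes> x \<in> M}" using a unfolding jac_mem by blast
      then show ?thesis by simp
    qed
    then show "a \<otimes> x \<in> ?J" unfolding jac_mem using ac x by simp
  qed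
qed

lemma max_image:
  fixes R (structure) and S (structure)
  assumes hr: "ring_hom_ring R S h" and surj: "h ` carrier R = carrier S"
    and M: "maximal_left_ideal R M"
    and ker: "\<And>x. x \<in> carrier R \<Longrightarrow> h x = \<zero>\<^bsub>S\<^esub> \<Longrightarrow> x \<in> M"
  shows "maximal_left_ideal S (h ` M)"
    and "\<And>x. x \<in> carrier R \<Longrightarrow> h x \<in> h ` M \<Longrightarrow> x \<in> M"
proof -
  interpret ring_hom_ring R S h by fact
  have R: "ring R" and S: "ring S" by (rule R.ring_axioms, rule S.ring_axioms)
  note Mi = maxE[OF R M]
  have Mne: "M \<noteq> carrier R"
    and Mmax: "\<And>K. left_ideal R K \<Longrightarrow> M \<subseteq> K \<Longrightarrow> K \<noteq> carrier R \<Longrightarrow> K = M"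
    using M unfolding maximal_left_ideal_def by auto
  show mem: "x \<in> M" if x: "x \<in> carrier R" and hx: "h x \<in> h ` M" for x
  proof -
    obtain m where m: "m \<in> M" "h x = h m" using hx by blast
    have mc: "m \<in> carrier R" using m Mi(1) by blast
    have "h (x \<oplus> \<ominus> m) = h x \<oplus>\<^bsub>S\<^esub> \<ominus>\<^bsub>S\<^esub> h m" using x mc by simp
    also have "\<dots> = \<zero>\<^bsub>S\<^esub>" using m(2) mc by (simp add: S.r_neg)
    finally have "x \<oplus> \<ominus> m \<in> M" using ker x mc by simp
    then have "(x \<oplus> \<ominus> m) \<oplus> m \<in> M" using Mi(3) m(1) by blast
    moreover have "(x \<oplus> \<ominus> m) \<oplus> m = x" using x mc by (simp add: R.a_assoc R.l_neg)
    ultimately show ?thesis by simp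
  qed
  have hM: "h ` M \<subseteq> carrier S" using Mi(1) by auto
  have HL: "left_ideal S (h ` M)"
    unfolding left_ideal_iff[OF S]
  proof (intro conjI ballI)
    show "h ` M \<subseteq> carrier S" by (rule hM)
    show "\<zero>\<^bsub>S\<^esub> \<in> h ` M" using Mi(2) hom_zero by (metis image_eqI)
  next
    fix x y assume "x \<in> h ` M" "y \<in> h ` M"
    then obtain u v where "u \<in> M" "v \<in> M" "x = h u" "y = h v" by blast
    moreover have "u \<in> carrier R" "v \<in> carrier R" using calculation Mi(1) by auto
    ultimately show "x \<oplus>\<^bsub>S\<^esub> y \<in> h ` M" using Mi(3) by (metis hom_add image_eqI)
  next
    fix x assume "x \<in> h ` M"
    then obtain u where "u \<in> M" "x = h u" by blast
    moreover have "u \<in> carrier R" using calculation Mi(1) by auto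
    ultimately show "\<ominus>\<^bsub>S\<^esub> x \<in> h ` M" using Mi(4) by (metis hom_a_inv image_eqI)
  next
    fix a x assume "a \<in> carrier S" "x \<in> h ` M"
    then obtain b u where "b \<in> carrier R" "u \<in> M" "x = h u" "a = h b" using surj by blast
    moreover have "u \<in> carrier R" using calculation Mi(1) by auto
    ultimately show "a \<otimes>\<^bsub>S\<^esub> x \<in> h ` M" using Mi(5) by (metis hom_mult image_eqI)
  qed
  have Hne: "h ` M \<noteq> carrier S"
  proof
    assume "h ` M = carrier S"
    then have "h \<one> \<in> h ` M" by simp
    then have "\<one> \<in> M" using mem by simp
    then have "carrier R \<subseteq> M" using Mi(5)[of _ "\<one>"] by (metis R.r_one subsetI)
    then show False using Mne Mi(1) by blast
  qed
  have "K = h ` M" if K: "left_ideal S K" "h ` M \<subseteq> K" "K \<noteq> carrier S" for K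
  proof -
    have Ki: "K \<subseteq> carrier S" "\<zero>\<^bsub>S\<^esub> \<in> K" "\<And>x y. x \<in> K \<Longrightarrow> y \<in> K \<Longrightarrow> x \<oplus>\<^bsub>S\<^esub> y \<in> K"
      "\<And>x. x \<in> K \<Longrightarrow> \<ominus>\<^bsub>S\<^esub> x \<in> K" "\<And>a x. a \<in> carrier S \<Longrightarrow> x \<in> K \<Longrightarrow> a \<otimes>\<^bsub>S\<^esub> x \<in> K"
      using K(1) left_ideal_iff[OF S] by auto
    let ?K0 = "{x \<in> carrier R. h x \<in> K}"
    have K0L: "left_ideal R ?K0"
      unfolding left_ideal_iff[OF R]
    proof (intro conjI ballI)
      show "?K0 \<subseteq> carrier R" by blast
      show "\<zero> \<in> ?K0" using Ki(2) by simp
    next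
      fix x y assume "x \<in> ?K0" "y \<in> ?K0"
      then show "x \<oplus> y \<in> ?K0" using Ki(3) by simp
    next
      fix x assume "x \<in> ?K0"
      then show "\<ominus> x \<in> ?K0" using Ki(4) by simp
    next
      fix a x assume "a \<in> carrier R" "x \<in> ?K0"
      then show "a \<otimes> x \<in> ?K0" using Ki(5) by simp
    qed
    have "M \<subseteq> ?K0" using K(2) Mi(1) by auto
    moreover have "?K0 \<noteq> carrier R"
    proof
      assume A: "?K0 = carrier R"
      have "carrier S \<subseteq> K"
      proof
        fix y assume "y \<in> carrier S"
        then obtain x where "x \<in> carrier R" "y = h x" using surj by blast
        then show "y \<in> K" using A by blast
      qed
      then show False using K(3) Ki(1) by blast
    qed
    ultimately have K0: "?K0 = M" using Mmax[OF K0L] by blast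
    have "K \<subseteq> h ` M"
    proof
      fix k assume "k \<in> K"
      then obtain x where "x \<in> carrier R" "k = h x" using Ki(1) surj by blast
      then have "x \<in> ?K0" using \<open>k \<in> K\<close> by simp
      then show "k \<in> h ` M" using K0 \<open>k = h x\<close> by blast
    qed
    then show ?thesis using K(2) by blast
  qed
  then show "maximal_left_ideal S (h ` M)" unfolding maximal_left_ideal_def using HL Hne by blast
qed


lemma main_helper:
  fixes R (structure)
  assumes "ring R"
    and "NJ_symmetric (R Quot (jacobson R))"
  shows "NJ_symmetric R"
proof -
  interpret ring R by fact
  let ?J = "jacobson R"
  interpret I: ideal ?J R by (rule jacobson_ideal[OF assms(1)])
  let ?S = "R Quot ?J"
  let ?h = "a_r_coset R ?J"
  have hr: "ring_hom_ring R ?S ?h" by (rule I.rcos_ring_hom_ring)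
  interpret H: ring_hom_ring R ?S ?h by (rule hr)
  have "carrier ?S = a_rcosets\<^bsub>R\<^esub> ?J" unfolding FactRing_def by (simp only: partial_object.simps)
  also have "a_rcosets\<^bsub>R\<^esub> ?J = (\<Union>x\<in>carrier R. {?h x})" unfolding A_RCOSETS_def' by (rule refl)
  finally have surj: "?h ` carrier R = carrier ?S" by blast
  have z: "\<zero>\<^bsub>?S\<^esub> = ?J" unfolding FactRing_def by (simp only: ring.simps)
  have ker: "x \<in> M" if M: "maximal_left_ideal R M" and x: "x \<in> carrier R"
    and hx: "?h x = \<zero>\<^bsub>?S\<^esub>" for M x
  proof -
    have "x \<in> ?h x" by (rule I.a_rcos_self[OF x])
    then have "x \<in> ?J" using hx z by (simp only:)
    then show ?thesis using M unfolding jac_mem by blast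
  qed
  show ?thesis
    unfolding NJ_symmetric_def
  proof (intro ballI impI)
    fix a b c assume a: "a \<in> carrier R" and b: "b \<in> carrier R" and c: "c \<in> carrier R"
      and nil: "a \<otimes> b \<otimes> c \<in> nilpotents R"
    obtain n :: nat where n: "(a \<otimes> b \<otimes> c) [^] n = \<zero>" using nil unfolding nilpotents_def by blast
    have "?h (a \<otimes> b \<otimes> c) [^]\<^bsub>?S\<^esub> n = ?h ((a \<otimes> b \<otimes> c) [^] n)"
      using a b c by (simp add: H.hom_nat_pow)
    also have "\<dots> = \<zero>\<^bsub>?S\<^esub>" using n by simp
    finally have "?h (a \<otimes> b \<otimes> c) \<in> nilpotents ?S"
      unfolding nilpotents_def using a b c by auto
    moreover have "?h (a \<otimes> b \<otimes> c) = ?h a \<otimes>\<^bsub>?S\<^esub> ?h b \<otimes>\<^bsub>?S\<^esub> ?h c"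
      using a b c by simp
    ultimately have "?h a \<otimes>\<^bsub>?S\<^esub> ?h b \<otimes>\<^bsub>?S\<^esub> ?h c \<in> nilpotents ?S" by simp
    then have "?h b \<otimes>\<^bsub>?S\<^esub> ?h a \<otimes>\<^bsub>?S\<^esub> ?h c \<in> jacobson ?S"
      using assms(2) a b c unfolding NJ_symmetric_def by (meson H.hom_closed)
    moreover have "?h b \<otimes>\<^bsub>?S\<^esub> ?h a \<otimes>\<^bsub>?S\<^esub> ?h c = ?h (b \<otimes> a \<otimes> c)"
      using a b c by simp
    ultimately have hj: "?h (b \<otimes> a \<otimes> c) \<in> jacobson ?S" by simp
    have bc: "b \<otimes> a \<otimes> c \<in> carrier R" using a b c by simp
    show "b \<otimes> a \<otimes> c \<in> jacobson R"
      unfolding jac_mem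
    proof (intro conjI allI impI bc)
      fix M assume M: "maximal_left_ideal R M"
      have "maximal_left_ideal ?S (?h ` M)"
        using max_image(1)[OF hr surj M] ker[OF M] by blast
      then have "?h (b \<otimes> a \<otimes> c) \<in> ?h ` M" using hj unfolding jac_mem by blast
      then show "b \<otimes> a \<otimes> c \<in> M" using max_image(2)[OF hr surj M] ker[OF M] bc by blast
    qed
  qed
qed


theorem theorem2p14:
  fixes R :: "('a, 'b) ring_scheme"
  assumes "ring R"
    and "NJ_symmetric (R Quot (jacobson R))"
  shows "NJ_symmetric R"
  using main_helper[OF assms] .

end
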